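(* Let $\mathbb{F}$ be a field of characteristic $p$, let $\mathbb{E}$ be an extension field and let $M\le\mathbb{E}^*$ be a subgroup of order $m=r^e$ with $r$ prime and $e\ge1$. Then there is no polynomial $f\in\mathbb{F}[x]$ such that $M$ is an automatically non-standard $f$-subgroup. In particular, there is no enumeration $s_0,\ldots,s_{m-1}$ of $M$ for which $\phi_{p,m}(x)$ divides $s_0x^{m-1}+s_1x^{m-2}+\cdots+s_{m-1}$.
   Context: $\phi_{p,m}$ is the $m$th cyclotomic polynomial reduced mod $p$ (if $p>0$); when $\gcd(m,p)=1$ its zeros are the primitive $m$th roots of unity. An $f$-sequence is a two-way infinite sequence with $f(\sigma)s=0$, $(\sigma s)_n=s_{n+1}$. For $m>1$ with $\gcd(m,p)=1$ if $p>0$: if $f$ divides $(x^m-1)/((x-1)\phi_{p,m}(x))$ and an $f$-sequence $s$ of period $m$ (over an extension of $\mathbb{F}$) has $M=\{s_0,\ldots,s_{m-1}\}$ a subgroup of size $m$, then $M$ is called an automatically non-standard $f$-subgroup. *)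

theory Defs
  imports "HOL-Computational_Algebra.Polynomial"
begin

text \<open>The m-th cyclotomic polynomial over the integers, defined by the standard
recursion  x^n - 1 = prod over d dvd n of Phi_d  (Phi_0 := 1 by convention).\<close>
function cyclo :: "nat \<Rightarrow> int poly" where
  "cyclo n = (if n = 0 then 1
     else (monom 1 n - 1) div (\<Prod>d \<in> {d. d dvd n \<and> d < n}. cyclo d))"
  by auto
termination
  by (relation "measure id") auto

text \<open>phi_{p,m}: the m-th cyclotomic polynomial reduced into the field 'a
(i.e. mod p = CHAR('a) when p > 0).\<close>
definition phi_pm :: "nat \<Rightarrow> 'a::field poly" where
  "phi_pm m = map_poly of_int (cyclo m)"

text \<open>h is the embedding of the base field F into the extension E.
An f-sequence: a two-way infinite sequence s over E with f(sigma) s = 0,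
where (sigma s)_n = s_{n+1}.\<close>
definition f_sequence :: "('f::field \<Rightarrow> 'e::field) \<Rightarrow> 'f poly \<Rightarrow> (int \<Rightarrow> 'e) \<Rightarrow> bool" where
  "f_sequence h f s \<longleftrightarrow>
     (\<forall>n. (\<Sum>i\<le>degree f. h (coeff f i) * s (n + int i)) = 0)"

definition has_period :: "(int \<Rightarrow> 'e) \<Rightarrow> nat \<Rightarrow> bool" where
  "has_period s m \<longleftrightarrow> (\<forall>n. s (n + int m) = s n)"

definition mult_subgroup :: "'e::field set \<Rightarrow> bool" where
  "mult_subgroup M \<longleftrightarrow> 0 \<notin> M \<and> 1 \<in> M \<and> (\<forall>x\<in>M. \<forall>y\<in>M. x * y \<in> M)
     \<and> (\<forall>x\<in>M. inverse x \<in> M)"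

definition auto_nonstandard ::
    "('f::field \<Rightarrow> 'e::field) \<Rightarrow> nat \<Rightarrow> 'f poly \<Rightarrow> 'e set \<Rightarrow> bool" where
  "auto_nonstandard h m f M \<longleftrightarrow>
     m > 1 \<and> (CHAR('f) > 0 \<longrightarrow> coprime m CHAR('f)) \<and>
     f dvd ((monom 1 m - 1) div ([:-1, 1:] * phi_pm m)) \<and>
     (\<exists>s. f_sequence h f s \<and> has_period s m \<and> M = s ` {0..<int m}) \<and>
     mult_subgroup M \<and> finite M \<and> card M = m"

end

theory Submission
  imports Defs
begin

declare cyclo.simps[simp del]

lemma cyclo_eq: "n \<noteq> 0 \<Longrightarrow> cyclo n = (monom 1 n - 1) div (\<Prod>d \<in> {d. d dvd n \<and> d < n}. cyclo d)"
  by (subst cyclo.simps) simp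

lemma monom_sub_dvd:
  fixes a b :: nat
  shows "(monom (1::'a::comm_ring_1) a - 1) dvd (monom 1 (a*b) - 1)"
proof -
  have "monom (1::'a) (a*b) = (monom 1 a)^b" by (simp add: monom_power)
  then show ?thesis by (simp add: power_diff_1_eq)
qed

lemma divset:
  assumes "prime (r::nat)"
  shows "{d. d dvd r^Suc e \<and> d < r^Suc e} = {d. d dvd r^e}"
proof (intro set_eqI iffI)
  fix d assume "d \<in> {d. d dvd r^Suc e \<and> d < r^Suc e}"
  then have dd: "d dvd r^Suc e" "d < r^Suc e" by auto
  then obtain i where i: "i \<le> Suc e" "d = r^i" "d < r^Suc e"
    using divides_primepow_nat[OF assms, of d "Suc e"] by blast
  have "i \<noteq> Suc e" using i by auto
  then have "i \<le> e" using i by auto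
  then show "d \<in> {d. d dvd r^e}" using i by (simp add: le_imp_power_dvd)
next
  fix d assume "d \<in> {d. d dvd r^e}"
  then have d: "d dvd r^e" by simp
  have "r > 1" using assms prime_gt_1_nat by blast
  have "r^e > 0" using \<open>r>1\<close> by simp
  then have "d \<le> r^e" using d dvd_imp_le by blast
  also have "r^e < r^Suc e" using \<open>r>1\<close> by simp
  finally show "d \<in> {d. d dvd r^Suc e \<and> d < r^Suc e}"
    using d by (simp add: dvd_mult2)
qed

lemma cyclo_prod:
  assumes "prime (r::nat)"
  shows "(\<Prod>d\<in>{d. d dvd r^e}. cyclo d) = monom 1 (r^e) - 1 \<and>
         cyclo (r^Suc e) * (monom 1 (r^e) - 1) = monom 1 (r^Suc e) - 1"
proof (induction e)
  case 0
  have s: "{d::nat. d dvd 1} = {1}" by auto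
  have e0: "{d::nat. d dvd 1 \<and> d < 1} = {}" by auto
  have c1: "cyclo 1 = monom 1 1 - 1"
    by (subst cyclo_eq) (auto simp only: e0 prod.empty div_by_1)
  have "r \<noteq> 0" using assms by auto
  have p1: "(\<Prod>d\<in>{d. d dvd r^0}. cyclo d) = monom 1 (r^0) - 1"
    by (simp only: power_0 s prod.insert_if prod.empty finite.emptyI empty_iff if_False mult_1_right c1)
  have "cyclo (r^Suc 0) = (monom 1 (r^Suc 0) - 1) div (\<Prod>d\<in>{d. d dvd r^0}. cyclo d)"
    using cyclo_eq[of "r^Suc 0"] divset[OF assms, of 0] \<open>r\<noteq>0\<close> by simp
  also have "\<dots> = (monom 1 (r^0 * r) - 1) div (monom 1 (r^0) - 1)"
    by (simp only: p1 power_Suc mult.commute)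
  finally have cc: "cyclo (r^Suc 0) = (monom 1 (r^0 * r) - 1) div (monom 1 (r^0) - 1)" .
  have nz: "monom (1::int) (r^0) - 1 \<noteq> 0"
  proof
    assume "monom (1::int) (r^0) - 1 = 0"
    then have "coeff (monom (1::int) (r^0) - 1) 1 = 0" by simp
    then show False by simp
  qed
  have dv: "(monom (1::int) (r^0) - 1) dvd (monom 1 (r^0*r) - 1)" by (rule monom_sub_dvd)
  have "cyclo (r^Suc 0) * (monom 1 (r^0) - 1) = monom 1 (r^0*r) - 1"
    unfolding cc using dv by (rule dvd_div_mult_self)
  then show ?case using p1 by (simp only: power_Suc mult.commute)
next
  case (Suc e)
  have "{d. d dvd r^Suc e} = insert (r^Suc e) {d. d dvd r^Suc e \<and> d < r^Suc e}"
  proof -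
    have "r^Suc e > 0" using assms prime_gt_0_nat by simp
    then have "\<And>x. x dvd r^Suc e \<Longrightarrow> x \<le> r^Suc e" using dvd_imp_le by blast
    then show ?thesis by force
  qed
  moreover have "finite {d. d dvd r^Suc e \<and> d < r^Suc e}" by simp
  moreover have "r^Suc e \<notin> {d. d dvd r^Suc e \<and> d < r^Suc e}" by simp
  ultimately have "(\<Prod>d\<in>{d. d dvd r^Suc e}. cyclo d) = cyclo (r^Suc e) * (\<Prod>d\<in>{d. d dvd r^e}. cyclo d)"
    using divset[OF assms, of e] by (metis prod.insert)
  then have 1: "(\<Prod>d\<in>{d. d dvd r^Suc e}. cyclo d) = monom 1 (r^Suc e) - 1"
    using Suc.IH by simp
  have rp: "r^Suc (Suc e) \<noteq> 0" using assms by auto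
  have "cyclo (r^Suc (Suc e)) = (monom 1 (r^Suc(Suc e)) - 1) div (\<Prod>d\<in>{d. d dvd r^Suc e}. cyclo d)"
    using cyclo_eq[OF rp] divset[OF assms, of "Suc e"] by simp
  also have "\<dots> = (monom 1 (r^Suc e * r) - 1) div (monom 1 (r^Suc e) - 1)"
    using 1 by (simp only: power_Suc[of r "Suc e"] mult.commute)
  finally have cc: "cyclo (r^Suc (Suc e)) = (monom 1 (r^Suc e * r) - 1) div (monom 1 (r^Suc e) - 1)" .
  have dv: "(monom (1::int) (r^Suc e) - 1) dvd (monom 1 (r^Suc e * r) - 1)" by (rule monom_sub_dvd)
  have 2: "cyclo (r^Suc (Suc e)) * (monom 1 (r^Suc e) - 1) = monom 1 (r^Suc e * r) - 1"
    unfolding cc using dv by (rule dvd_div_mult_self)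
  show ?case using 1 2 by (simp only: power_Suc[of r "Suc e"] mult.commute)
qed

lemma map_of_int_mult:
  "map_poly (of_int :: int \<Rightarrow> 'a::comm_ring_1) (p * q) = map_poly of_int p * map_poly of_int q"
  by (simp add: poly_eq_iff coeff_map_poly coeff_mult of_int_sum)

lemma map_of_int_monom1:
  "map_poly (of_int :: int \<Rightarrow> 'a::comm_ring_1) (monom 1 n - 1) = monom 1 n - 1"
  by (simp add: poly_eq_iff coeff_map_poly)

lemma phi_pp:
  assumes "prime (r::nat)"
  shows "(monom 1 (r^e) - 1) * (phi_pm (r^Suc e) :: 'a::field poly) = monom 1 (r^Suc e) - 1"
proof -
  have "cyclo (r^Suc e) * (monom 1 (r^e) - 1) = monom 1 (r^Suc e) - 1"
    using cyclo_prod[OF assms] by blast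
  then have "map_poly (of_int :: int \<Rightarrow> 'a) (cyclo (r^Suc e) * (monom 1 (r^e) - 1)) = monom 1 (r^Suc e) - 1"
    by (simp only: map_of_int_monom1)
  then show ?thesis unfolding phi_pm_def map_of_int_mult map_of_int_monom1 by (simp add: mult.commute)
qed

lemma coeff_g:
  "coeff (\<Sum>i<m. monom (s i) (m - 1 - i)) j = (if j < m then s (m - 1 - j) else 0)"
proof -
  have "coeff (\<Sum>i<m. monom (s i) (m - 1 - i)) j = (\<Sum>i<m. if m - 1 - i = j then s i else 0)"
    by (simp add: coeff_sum coeff_monom)
  also have "\<dots> = (\<Sum>i<m. if i = m - 1 - j \<and> j < m then s i else 0)"
    by (rule sum.cong) auto
  also have "\<dots> = (if j < m then s (m - 1 - j) else 0)"
    by (cases "j < m") (auto simp: sum.delta)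
  finally show ?thesis .
qed

lemma degree_monom_minus1:
  assumes "n \<ge> 1"
  shows "degree (monom (1::'a::field) n - 1) = n"
proof (rule antisym)
  show "degree (monom (1::'a) n - 1) \<le> n"
    by (rule degree_le) (auto simp: coeff_monom)
  have "coeff (monom (1::'a) n - 1) n \<noteq> 0" using assms by (simp add: coeff_monom)
  then show "n \<le> degree (monom (1::'a) n - 1)" by (rule le_degree)
qed

lemma part2:
  assumes r: "prime (r::nat)" and e: "e \<ge> 1" and m: "m = r ^ e"
    and inj: "inj_on s {..<m}"
  shows "\<not> (phi_pm m :: 'a::field poly) dvd (\<Sum>i<m. monom (s i) (m - 1 - i))"
proof
  define k where "k = r ^ (e - 1)"
  have r1: "r > 1" using r prime_gt_1_nat by blast
  have mk: "m = r ^ Suc (e - 1)" using m e by simp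
  have k1: "k \<ge> 1" using r1 k_def by simp
  have km: "k < m" using mk k_def r1 by simp
  define g where "g = (\<Sum>i<m. monom (s i) (m - 1 - i))"
  have PX: "(monom 1 k - 1) * (phi_pm m :: 'a poly) = monom 1 m - 1"
    using phi_pp[OF r, of "e - 1"] mk k_def by simp
  assume "(phi_pm m :: 'a poly) dvd (\<Sum>i<m. monom (s i) (m - 1 - i))"
  then obtain q where q: "g = phi_pm m * q" unfolding g_def by (auto elim: dvdE)
  have eq: "g * (monom 1 k - 1) = q * (monom 1 m - 1)"
  proof -
    have "g * (monom 1 k - 1) = q * ((monom 1 k - 1) * phi_pm m)" by (simp add: q mult_ac)
    then show ?thesis by (simp only: PX)
  qed
  have dg: "degree g \<le> m - 1"
  proof (rule degree_le, intro allI impI)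
    fix j assume "m - 1 < j"
    then have "\<not> j < m" by simp
    then show "coeff g j = 0" unfolding g_def coeff_g by simp
  qed
  have cqk: "coeff q k = 0"
  proof (cases "q = 0")
    case False
    have "degree (q * (monom 1 m - 1)) = degree q + m"
      using False km degree_monom_minus1[of m] degree_mult_eq[of q "monom 1 m - 1"]
      by (metis k1 le_less_trans less_imp_le_nat not_one_le_zero degree_0 linorder_not_less)
    moreover have "degree (g * (monom 1 k - 1)) \<le> m - 1 + k"
      using degree_mult_le[of g "monom 1 k - 1"] degree_monom_minus1[OF k1, where 'a='a] dg by linarith
    ultimately have "degree q < k" using eq km by simp
    then show ?thesis by (simp add: coeff_eq_0)
  qed simp
  have "g * (monom 1 k - 1) = monom 1 k * g - g"
    by (simp only: right_diff_distrib mult_1_right mult.commute[of g])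
  then have "coeff (g * (monom 1 k - 1)) k = coeff g 0 - coeff g k"
    by (simp only: coeff_diff coeff_monom_mult) simp
  moreover have "q * (monom 1 m - 1) = monom 1 m * q - q"
    by (simp only: right_diff_distrib mult_1_right mult.commute[of q])
  then have "coeff (q * (monom 1 m - 1)) k = - coeff q k"
    using km by (simp only: coeff_diff coeff_monom_mult) simp
  ultimately have "coeff g 0 = coeff g k" using eq cqk by simp
  then have "s (m - 1) = s (m - 1 - k)" using km unfolding g_def coeff_g by simp
  moreover have "m - 1 \<in> {..<m}" "m - 1 - k \<in> {..<m}" using km by auto
  ultimately have "m - 1 = m - 1 - k" using inj by (meson inj_on_eq_iff)
  then show False using km k1 by simp
qed

definition Lop :: "('f::field \<Rightarrow> 'e::field) \<Rightarrow> 'f poly \<Rightarrow> (int \<Rightarrow> 'e) \<Rightarrow> int \<Rightarrow> 'e" where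
  "Lop h p s n = (\<Sum>i\<le>degree p. h (coeff p i) * s (n + int i))"

lemma Lop_ext:
  assumes h0: "h 0 = 0" and N: "degree p \<le> N"
  shows "Lop h p s n = (\<Sum>i\<le>N. h (coeff p i) * s (n + int i))"
  unfolding Lop_def
proof (rule sum.mono_neutral_left)
  show "\<forall>i\<in>{..N} - {..degree p}. h (coeff p i) * s (n + int i) = 0"
    using h0 by (auto simp: coeff_eq_0)
qed (use N in auto)

lemma Lop_add:
  assumes h0: "h 0 = 0" and hadd: "\<And>x y. h (x + y) = h x + h y"
  shows "Lop h (p + q) s n = Lop h p s n + Lop h q s n"
proof -
  define N where "N = max (degree p) (degree q)"
  have "degree (p + q) \<le> N" unfolding N_def by (rule degree_add_le_max)
  then have "Lop h (p + q) s n = (\<Sum>i\<le>N. h (coeff (p+q) i) * s (n + int i))"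
    using Lop_ext[where h=h, OF h0] by blast
  also have "\<dots> = (\<Sum>i\<le>N. h (coeff p i) * s (n + int i)) + (\<Sum>i\<le>N. h (coeff q i) * s (n + int i))"
    by (simp add: hadd distrib_right sum.distrib)
  also have "\<dots> = Lop h p s n + Lop h q s n"
    using Lop_ext[where h=h, OF h0, of p N] Lop_ext[where h=h, OF h0, of q N] N_def by simp
  finally show ?thesis .
qed

lemma Lop_smult:
  assumes h0: "h 0 = 0" and hmult: "\<And>x y. h (x * y) = h x * h y"
  shows "Lop h (smult a p) s n = h a * Lop h p s n"
proof -
  have "degree (smult a p) \<le> degree p" by (rule degree_smult_le)
  then have "Lop h (smult a p) s n = (\<Sum>i\<le>degree p. h (coeff (smult a p) i) * s (n + int i))"
    using Lop_ext[where h=h, OF h0] by blast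
  also have "\<dots> = h a * Lop h p s n"
    by (simp add: Lop_def hmult sum_distrib_left mult.assoc)
  finally show ?thesis .
qed

lemma Lop_shift:
  assumes h0: "h 0 = 0"
  shows "Lop h (pCons 0 p) s n = Lop h p s (n + 1)"
proof -
  have "degree (pCons 0 p) \<le> Suc (degree p)" by simp
  then have "Lop h (pCons 0 p) s n = (\<Sum>i\<le>Suc (degree p). h (coeff (pCons 0 p) i) * s (n + int i))"
    using Lop_ext[where h=h, OF h0] by blast
  also have "\<dots> = (\<Sum>i\<le>degree p. h (coeff p i) * s (n + 1 + int i))"
    apply (subst sum.atMost_Suc_shift)
    apply (simp del: sum.atMost_Suc add: h0 add_ac)
    done
  finally show ?thesis by (simp add: Lop_def)
qed

lemma Lop_mult:
  assumes h0: "h 0 = 0" and hadd: "\<And>x y. h (x + y) = h x + h y"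
    and hmult: "\<And>x y. h (x * y) = h x * h y"
    and f: "\<forall>n. Lop h f s n = 0"
  shows "\<forall>n. Lop h (f * q) s n = 0"
proof (induction q rule: pCons_induct)
  case 0
  show ?case by (simp add: Lop_def h0)
next
  case (pCons a q)
  show ?case
    by (simp add: mult_pCons_right Lop_add[where h=h, OF h0 hadd] Lop_smult[where h=h, OF h0 hmult] Lop_shift[where h=h, OF h0] f pCons.IH)
qed

lemma Lop_xk:
  fixes h :: "'f::field \<Rightarrow> 'e::field"
  assumes h0: "h 0 = 0" and h1: "h 1 = 1" and hadd: "\<And>x y. h (x + y) = h x + h y"
    and k: "k \<ge> 1"
  shows "Lop h (monom 1 k - 1) s n = s (n + int k) - s n"
proof -
  have hneg: "h (- x) = - h x" for x
    using hadd[of x "- x"] h0 by (simp add: eq_neg_iff_add_eq_0 add.commute)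
  have deg: "degree (monom (1::'f) k - 1) \<le> k"
    by (rule degree_le) (auto simp: coeff_monom)
  have "Lop h (monom 1 k - 1) s n = (\<Sum>i\<le>k. h (coeff (monom 1 k - 1) i) * s (n + int i))"
    using Lop_ext[where h=h, OF h0 deg] by blast
  also have "\<dots> = (\<Sum>i\<le>k. (if i = k then s (n + int i) else 0) - (if i = 0 then s (n + int i) else 0))"
  proof (rule sum.cong)
    fix i assume "i \<in> {..k}"
    show "h (coeff (monom 1 k - 1) i) * s (n + int i) =
      (if i = k then s (n + int i) else 0) - (if i = 0 then s (n + int i) else 0)"
      using k by (cases "i = k"; cases "i = 0") (auto simp: coeff_monom h0 h1 hneg)
  qed simp
  also have "\<dots> = s (n + int k) - s n"
    by (simp add: sum_subtractf)
  finally show ?thesis .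
qed

lemma part1:
  fixes h :: "'f::field \<Rightarrow> 'e::field"
  assumes h1: "h 1 = 1" and hadd: "\<And>x y. h (x + y) = h x + h y"
    and hmult: "\<And>x y. h (x * y) = h x * h y"
    and r: "prime (r::nat)" and e: "e \<ge> 1" and m: "m = r ^ e"
  shows "\<not> auto_nonstandard h m f M"
proof
  assume A: "auto_nonstandard h m f M"
  have h0: "h 0 = 0" using hadd[of 0 0] by (metis add_cancel_right_right add_0)
  define k where "k = r ^ (e - 1)"
  have r1: "r > 1" using r prime_gt_1_nat by blast
  have mk: "m = r ^ Suc (e - 1)" using m e by simp
  have k1: "k \<ge> 1" using r1 k_def by simp
  have km: "k < m" using mk k_def r1 by simp
  define P where "P = (phi_pm m :: 'f poly)"
  have PX: "(monom 1 k - 1) * P = monom 1 m - 1"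
    using phi_pp[OF r, of "e - 1"] mk k_def P_def by simp
  have "poly (monom (1::'f) k - 1) 1 = 0" by (simp add: poly_monom)
  then have "[:-1, 1:] dvd (monom (1::'f) k - 1)" using poly_eq_0_iff_dvd[of "monom (1::'f) k - 1" 1] by simp
  then obtain u where u: "monom (1::'f) k - 1 = [:-1, 1:] * u" by (auto elim: dvdE)
  have "monom (1::'f) m - 1 \<noteq> 0"
    using degree_monom_minus1[of m, where 'a='f] km by auto
  then have "P \<noteq> 0" using PX by auto
  moreover have "[:-1, 1::'f:] \<noteq> 0" by simp
  ultimately have nz: "[:-1, 1:] * P \<noteq> 0" by (metis mult_eq_0_iff)
  have "(monom 1 m - 1) div ([:-1, 1:] * P) = u"
  proof -
    have "monom 1 m - 1 = ([:-1, 1:] * u) * P" using PX u by simp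
    then have "monom 1 m - 1 = ([:-1, 1:] * P) * u" by (simp only: mult_ac)
    then show ?thesis using nz by simp
  qed
  then have fu: "f dvd u" using A unfolding auto_nonstandard_def P_def by simp
  have "f dvd monom 1 k - 1" unfolding u using fu by (rule dvd_mult)
  then obtain q where q: "monom 1 k - 1 = f * q" by (auto elim: dvdE)
  from A obtain s where fs: "f_sequence h f s" and hp: "has_period s m"
    and Ms: "M = s ` {0..<int m}" and cM: "card M = m"
    unfolding auto_nonstandard_def by blast
  have "\<forall>n. Lop h f s n = 0" using fs unfolding f_sequence_def Lop_def by simp
  then have "\<forall>n. Lop h (f * q) s n = 0" using Lop_mult[OF h0 hadd hmult] by blast
  then have "Lop h (monom 1 k - 1) s 0 = 0" using q by simp
  then have sk: "s (int k) = s 0" using Lop_xk[where h=h, OF h0 h1 hadd k1, of s 0] by simp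
  have "card (s ` {0..<int m}) = card {0..<int m}" using cM Ms by simp
  then have "inj_on s {0..<int m}" by (intro eq_card_imp_inj_on) auto
  moreover have "int k \<in> {0..<int m}" "0 \<in> {0..<int m}" using km by auto
  ultimately have "int k = 0" using sk by (meson inj_on_eq_iff)
  then show False using k1 by simp
qed

theorem mainTheorem9:
  fixes h :: "'f::field \<Rightarrow> 'e::field"
    and M :: "'e set" and r e m :: nat
  assumes hom_1: "h 1 = 1"
    and hom_add: "\<And>x y. h (x + y) = h x + h y"
    and hom_mult: "\<And>x y. h (x * y) = h x * h y"
    and sub: "mult_subgroup M" and fin: "finite M" and card: "card M = m"
    and m_def: "m = r ^ e" and r: "prime r" and e: "e \<ge> 1"
  shows "(\<nexists>f :: 'f poly. auto_nonstandard h m f M) \<and>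
         (\<nexists>s :: nat \<Rightarrow> 'e. bij_betw s {..<m} M \<and>
             phi_pm m dvd (\<Sum>i<m. monom (s i) (m - 1 - i)))"
proof
  show "\<nexists>f :: 'f poly. auto_nonstandard h m f M"
  proof
    assume "\<exists>f :: 'f poly. auto_nonstandard h m f M"
    then obtain f :: "'f poly" where "auto_nonstandard h m f M" ..
    with part1[OF hom_1 hom_add hom_mult r e m_def, of f M] show False by simp
  qed
  show "\<nexists>s :: nat \<Rightarrow> 'e. bij_betw s {..<m} M \<and>
             phi_pm m dvd (\<Sum>i<m. monom (s i) (m - 1 - i))"
  proof
    assume "\<exists>s :: nat \<Rightarrow> 'e. bij_betw s {..<m} M \<and>
             phi_pm m dvd (\<Sum>i<m. monom (s i) (m - 1 - i))"
    then obtain s :: "nat \<Rightarrow> 'e" where s: "bij_betw s {..<m} M"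
      "phi_pm m dvd (\<Sum>i<m. monom (s i) (m - 1 - i))" by blast
    have "inj_on s {..<m}" using s(1) by (rule bij_betw_imp_inj_on)
    with part2[OF r e m_def, of s] s(2) show False by simp
  qed
qed

end
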